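(* Consider a radial three-phase distribution grid on buses $\{0,\ldots,N\}$ (feeder bus $0$, each bus $n\geq1$ with parent $\pi_n<n$, line $n$ joining $\pi_n$ and $n$), with symmetric phase impedance matrices $\mathbf{Z}_n=\mathbf{Z}_n^{\top}\in\mathbb{C}^{3\times3}$, $n=1,\ldots,N$. Let $\tilde{\mathbf{Z}}_n:=\operatorname{diag}(\boldsymbol{\alpha}^* )\mathbf{Z}_n\operatorname{diag}(\boldsymbol{\alpha})$ with $\boldsymbol{\alpha}:=[1~\alpha~\alpha^2]^{\top}$, $\alpha=e^{-j2\pi/3}$, and $\mathbf{X}:=2\mathbf{M}\,\mathrm{bdiag}(\{\mathrm{Im}[\tilde{\mathbf{Z}}_n]\})\mathbf{M}^{\top}$ with $\mathbf{M}:=\mathbf{T}(\mathbf{I}_3\otimes\mathbf{F})\mathbf{T}^{\top}$. If $\mathrm{Im}[\mathbf{Z}_n]$ is strictly diagonally dominant with positive diagonal entries for all $n$, then $\mathbf{X}\succeq\mathbf{0}$.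
   Context: The full branch-bus incidence matrix $\tilde{\mathbf{A}}=[\mathbf{a}_0~\mathbf{A}]\in\mathbb{R}^{N\times(N+1)}$ has in row $n$ entry $+1$ at column $\pi_n$, $-1$ at column $n$, zeros elsewhere; $\mathbf{A}$ is the reduced incidence matrix (column of bus $0$ removed) and $\mathbf{F}:=-\mathbf{A}^{-1}$. $\mathrm{bdiag}(\{\mathbf{Y}_n\})$ is block diagonal with blocks $\mathbf{Y}_1,\ldots,\mathbf{Y}_N$. $\mathbf{T}:=[\mathbf{I}_3\otimes\mathbf{e}_1^{\top};\ldots;\mathbf{I}_3\otimes\mathbf{e}_N^{\top}]\in\mathbb{R}^{3N\times3N}$ (blocks stacked vertically), with $\mathbf{e}_n$ the $n$-th column of $\mathbf{I}_N$. $^*$ is entrywise conjugation, $\mathrm{Im}$ entrywise imaginary part. For a non-symmetric real matrix $\mathbf{Y}$, $\mathbf{Y}\succeq\mathbf{0}$ means $\mathbf{u}^{\top}\mathbf{Y}\mathbf{u}\geq0$ for all real $\mathbf{u}$. *)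

theory Defs
  imports Complex_Main "Jordan_Normal_Form.Gauss_Jordan_Elimination"
begin

text \<open>Matrices are Jordan_Normal_Form matrices (0-based indices).
Buses are 0..N, lines/non-feeder buses 1..N; parent function par with par n < n.
Row i (0-based) of the reduced incidence matrix corresponds to line i+1,
column j (0-based) to bus j+1.\<close>

definition reduced_incidence :: "nat \<Rightarrow> (nat \<Rightarrow> nat) \<Rightarrow> real mat" where
  "reduced_incidence N par = mat N N (\<lambda>(i,j).
     (if j + 1 = par (i + 1) then 1 else 0) - (if j = i then 1 else 0))"

definition Fmat :: "nat \<Rightarrow> (nat \<Rightarrow> nat) \<Rightarrow> real mat" where
  "Fmat N par = - the (mat_inverse (reduced_incidence N par))"

definition kron :: "'a :: times mat \<Rightarrow> 'a mat \<Rightarrow> 'a mat" where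
  "kron A B = mat (dim_row A * dim_row B) (dim_col A * dim_col B)
     (\<lambda>(i,j). A $$ (i div dim_row B, j div dim_col B) * B $$ (i mod dim_row B, j mod dim_col B))"

text \<open>e_n^T as a 1 x N row matrix (n is 1-based as in the paper).\<close>
definition unit_row :: "nat \<Rightarrow> nat \<Rightarrow> real mat" where
  "unit_row N n = mat 1 N (\<lambda>(_,j). if j + 1 = n then 1 else 0)"

text \<open>T = [I_3 kron e_1^T; ...; I_3 kron e_N^T], blocks stacked vertically.\<close>
definition Tmat :: "nat \<Rightarrow> real mat" where
  "Tmat N = mat (3 * N) (3 * N) (\<lambda>(i,j). kron (1\<^sub>m 3) (unit_row N (i div 3 + 1)) $$ (i mod 3, j))"

definition bdiag3 :: "nat \<Rightarrow> (nat \<Rightarrow> 'a :: zero mat) \<Rightarrow> 'a mat" where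
  "bdiag3 N Y = mat (3 * N) (3 * N) (\<lambda>(i,j).
     if i div 3 = j div 3 then Y (i div 3 + 1) $$ (i mod 3, j mod 3) else 0)"

definition Mmat :: "nat \<Rightarrow> (nat \<Rightarrow> nat) \<Rightarrow> real mat" where
  "Mmat N par = Tmat N * kron (1\<^sub>m 3) (Fmat N par) * transpose_mat (Tmat N)"

definition alpha :: complex where "alpha = cis (- 2 * pi / 3)"

definition alpha_vec :: "complex vec" where
  "alpha_vec = vec 3 (\<lambda>k. alpha ^ k)"

definition diag_vec :: "complex vec \<Rightarrow> complex mat" where
  "diag_vec v = mat (dim_vec v) (dim_vec v) (\<lambda>(i,j). if i = j then v $ i else 0)"

definition Ztilde :: "complex mat \<Rightarrow> complex mat" where
  "Ztilde Z = diag_vec (map_vec cnj alpha_vec) * Z * diag_vec alpha_vec"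

definition Xmat :: "nat \<Rightarrow> (nat \<Rightarrow> nat) \<Rightarrow> (nat \<Rightarrow> complex mat) \<Rightarrow> real mat" where
  "Xmat N par Z = 2 \<cdot>\<^sub>m (Mmat N par * bdiag3 N (\<lambda>n. map_mat Im (Ztilde (Z n))) * transpose_mat (Mmat N par))"

definition strictly_diag_dominant :: "real mat \<Rightarrow> bool" where
  "strictly_diag_dominant A \<longleftrightarrow> (\<forall>k < dim_row A.
     \<bar>A $$ (k,k)\<bar> > (\<Sum>l \<in> {0..<dim_col A} - {k}. \<bar>A $$ (k,l)\<bar>))"

text \<open>Y \<succeq> 0 for a possibly non-symmetric real matrix: u^T Y u \<ge> 0 for all real u.\<close>
definition psd_real :: "real mat \<Rightarrow> bool" where
  "psd_real Y \<longleftrightarrow> (\<forall>u \<in> carrier_vec (dim_row Y). u \<bullet> (Y *\<^sub>v u) \<ge> 0)"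

end

theory Submission imports Defs begin

lemma alpha_eq: "alpha = Complex (-1/2) (-sqrt 3/2)"
  unfolding alpha_def by (simp add: complex_eq_iff cos_120 sin_120)

lemma alpha2_eq: "alpha^2 = Complex (-1/2) (sqrt 3/2)"
  unfolding alpha_eq by (simp add: power2_eq_square complex_eq_iff field_simps)

lemma if0_mult: "(if P then a else 0) * (b::'a::semiring_0) = (if P then a * b else 0)"
  "b * (if P then a else 0) = (if P then b * a else 0)" by auto

lemma diag_mult_entry:
  assumes "Z \<in> carrier_mat n n" "k < n" "l < n" "dim_vec v = n" "dim_vec w = n"
  shows "(diag_vec v * Z * diag_vec w) $$ (k,l) = v $ k * Z $$ (k,l) * w $ l"
proof -
  have 1: "(diag_vec v * Z) $$ (k,j) = v $ k * Z $$ (k,j)" if "j < n" for j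
    using assms that unfolding diag_vec_def
    by (simp add: scalar_prod_def if0_mult sum.delta)
  have "(diag_vec v * Z * diag_vec w) $$ (k,l) = (\<Sum>j<n. (diag_vec v * Z) $$ (k,j) * (if j = l then w $ l else 0))"
    using assms unfolding diag_vec_def
    by (simp add: scalar_prod_def atLeast0LessThan cong: if_cong)
  also have "\<dots> = (diag_vec v * Z) $$ (k,l) * w $ l"
    using assms by (simp add: if0_mult sum.delta')
  finally show ?thesis using 1 assms by simp
qed

lemma Ztilde_entry:
  assumes "Z \<in> carrier_mat 3 3" "k < 3" "l < 3"
  shows "Ztilde Z $$ (k,l) = (cnj (alpha^k) * alpha^l) * Z $$ (k,l)"
  using diag_mult_entry[OF assms, of "map_vec cnj alpha_vec" alpha_vec] assms(2,3)
  unfolding Ztilde_def by (simp add: alpha_vec_def)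

definition s3 :: real where "s3 = sqrt 3 / 2"

lemma s3sq: "s3 * s3 = 3/4"
  unfolding s3_def by (simp add: real_sqrt_mult[symmetric])

lemma alpha_s3: "alpha = Complex (-1/2) (-s3)" unfolding alpha_eq s3_def by simp

lemma cnj_alpha: "cnj alpha = Complex (-1/2) s3" unfolding alpha_s3 by (simp add: complex_eq_iff)

lemma alpha2_s3: "alpha^2 = Complex (-1/2) s3"
  unfolding power2_eq_square alpha_s3 by (simp add: complex_eq_iff s3sq)

lemma cnj_alpha2: "cnj (alpha^2) = Complex (-1/2) (-s3)" unfolding alpha2_s3 by (simp add: complex_eq_iff)

lemma cvals:
  "cnj (alpha^0) * alpha^0 = 1"
  "cnj (alpha^0) * alpha^1 = Complex (-1/2) (-s3)"
  "cnj (alpha^0) * alpha^2 = Complex (-1/2) s3"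
  "cnj (alpha^1) * alpha^0 = Complex (-1/2) s3"
  "cnj (alpha^1) * alpha^1 = 1"
  "cnj (alpha^1) * alpha^2 = Complex (-1/2) (-s3)"
  "cnj (alpha^2) * alpha^0 = Complex (-1/2) (-s3)"
  "cnj (alpha^2) * alpha^1 = Complex (-1/2) s3"
  "cnj (alpha^2) * alpha^2 = 1"
  unfolding power_one_right power_0 complex_cnj_one mult_1_left mult_1_right
  unfolding cnj_alpha2 alpha2_s3
  unfolding cnj_alpha alpha_s3
  by (simp_all add: complex_eq_iff s3sq algebra_simps)

lemma sum3': "(\<Sum>k<3. (g::nat\<Rightarrow>real) k) = g 0 + g 1 + g 2"
proof -
  have h: "{..<3::nat} = insert 0 (insert 1 (insert 2 {}))" by auto
  have "(\<Sum>k<3. g k) = g 0 + (g 1 + (g 2 + 0))"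
    unfolding h by (subst sum.insert, simp, simp)+ (simp only: sum.empty)
  then show ?thesis by simp
qed
lemma sum9: "(\<Sum>k<3. \<Sum>l<3. (f::nat\<Rightarrow>nat\<Rightarrow>real) k l) = (f 0 0 + f 0 1 + f 0 2) + (f 1 0 + f 1 1 + f 1 2) + (f 2 0 + f 2 1 + (f 2 2::real))"
  by (simp only: sum3')

lemma absprod: "\<bar>x*y\<bar> + \<bar>x*y\<bar> \<le> x^2+(y::real)^2"
proof -
  have "0 \<le> (\<bar>x\<bar> - \<bar>y\<bar>)^2" by simp
  also have "\<dots> = x^2 + y^2 - (\<bar>x*y\<bar> + \<bar>x*y\<bar>)" by (simp add: power2_eq_square abs_mult algebra_simps)
  finally show ?thesis by simp
qed
lemma hb: "c * x * y + c * x * y \<le> \<bar>c\<bar> * x^2 + \<bar>c\<bar> * (y::real)^2"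
proof -
  have 1: "c * x * y \<le> \<bar>c\<bar> * \<bar>x*y\<bar>"
    by (metis abs_ge_self abs_mult mult.assoc)
  have "\<bar>c\<bar> * (\<bar>x*y\<bar> + \<bar>x*y\<bar>) \<le> \<bar>c\<bar> * (x^2+y^2)" using absprod[of x y] by (intro mult_left_mono) auto
  then have "\<bar>c\<bar> * \<bar>x*y\<bar> + \<bar>c\<bar> * \<bar>x*y\<bar> \<le> \<bar>c\<bar> * x^2 + \<bar>c\<bar> * y^2" by (simp only: distrib_left)
  then show ?thesis using 1 by linarith
qed
lemma dd3:
  fixes b :: "nat \<Rightarrow> nat \<Rightarrow> real"
  assumes "b 0 0 > \<bar>b 0 1\<bar> + \<bar>b 0 2\<bar>" "b 1 1 > \<bar>b 1 0\<bar> + \<bar>b 1 2\<bar>"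
   "b 2 2 > \<bar>b 2 0\<bar> + \<bar>b 2 1\<bar>" "b 0 1 = b 1 0" "b 0 2 = b 2 0" "b 1 2 = b 2 1"
  shows "b 0 0 * u0^2 + b 1 1 * u1^2 + b 2 2 * u2^2 - b 0 1 * u0 * u1 - b 0 2 * u0 * u2 - b 1 2 * u1 * u2 \<ge> 0"
proof -
  have p: "\<bar>b 0 1\<bar> + \<bar>b 0 2\<bar> \<le> b 0 0" "\<bar>b 0 1\<bar> + \<bar>b 1 2\<bar> \<le> b 1 1" "\<bar>b 0 2\<bar> + \<bar>b 1 2\<bar> \<le> b 2 2"
    using assms by auto
  have q0: "\<bar>b 0 1\<bar> * u0^2 + \<bar>b 0 2\<bar> * u0^2 \<le> b 0 0 * u0^2"
    using mult_right_mono[OF p(1), of "u0^2"] by (simp add: distrib_right)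
  have q1: "\<bar>b 0 1\<bar> * u1^2 + \<bar>b 1 2\<bar> * u1^2 \<le> b 1 1 * u1^2"
    using mult_right_mono[OF p(2), of "u1^2"] by (simp add: distrib_right)
  have q2: "\<bar>b 0 2\<bar> * u2^2 + \<bar>b 1 2\<bar> * u2^2 \<le> b 2 2 * u2^2"
    using mult_right_mono[OF p(3), of "u2^2"] by (simp add: distrib_right)
  have n: "0 \<le> b 0 0 * u0^2" "0 \<le> b 1 1 * u1^2" "0 \<le> b 2 2 * u2^2"
    using p by (auto intro!: mult_nonneg_nonneg)
  show ?thesis using hb[of "b 0 1" u0 u1] hb[of "b 0 2" u0 u2] hb[of "b 1 2" u1 u2] q0 q1 q2 n
    by linarith
qed

lemma quad3:
  assumes Z: "Z \<in> carrier_mat 3 3" and sym: "transpose_mat Z = Z"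
    and dd: "strictly_diag_dominant (map_mat Im Z)"
    and pos: "\<And>k. k < 3 \<Longrightarrow> Im (Z $$ (k,k)) > 0"
  shows "(\<Sum>k<3. \<Sum>l<3. x k * Im (Ztilde Z $$ (k,l)) * x l) \<ge> 0"
proof -
  define b where "b = (\<lambda>k l. Im (Z $$ (k,l)))"
  define a where "a = (\<lambda>k l. Re (Z $$ (k,l)))"
  have E: "\<And>k l. k < 3 \<Longrightarrow> l < 3 \<Longrightarrow> Im (Ztilde Z $$ (k,l)) =
     Re (cnj (alpha^k) * alpha^l) * b k l + Im (cnj (alpha^k) * alpha^l) * a k l"
    using Ztilde_entry[OF Z] unfolding a_def b_def by simp
  have s: "\<And>k l. k < 3 \<Longrightarrow> l < 3 \<Longrightarrow> Z $$ (k,l) = Z $$ (l,k)"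
    using Z by (metis carrier_matD(1) carrier_matD(2) index_transpose_mat(1) sym)
  have s01: "a 0 1 = a 1 0" "b 0 1 = b 1 0" using s[of 0 1] by (auto simp: a_def b_def)
  have s02: "a 0 2 = a 2 0" "b 0 2 = b 2 0" using s[of 0 2] by (auto simp: a_def b_def)
  have s12: "a 1 2 = a 2 1" "b 1 2 = b 2 1" using s[of 1 2] by (auto simp: a_def b_def)
  have set0: "{0..<3} - {0::nat} = {1,2}" by auto
  have set1: "{0..<3} - {1::nat} = {0,2}" by auto
  have set2: "{0..<3} - {2::nat} = {0,1}" by auto
  have ddk: "\<And>k. k < 3 \<Longrightarrow> \<bar>b k k\<bar> > (\<Sum>l \<in> {0..<3} - {k}. \<bar>b k l\<bar>)"
    using dd Z unfolding strictly_diag_dominant_def b_def by auto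
  have d0: "b 0 0 > \<bar>b 0 1\<bar> + \<bar>b 0 2\<bar>" using ddk[of 0] pos[of 0] unfolding set0 by (simp add: b_def)
  have d1: "b 1 1 > \<bar>b 1 0\<bar> + \<bar>b 1 2\<bar>" using ddk[of 1] pos[of 1] unfolding set1 by (simp add: b_def)
  have d2: "b 2 2 > \<bar>b 2 0\<bar> + \<bar>b 2 1\<bar>" using ddk[of 2] pos[of 2] unfolding set2 by (simp add: b_def)
  have e00: "Im (Ztilde Z $$ (0,0)) = b 0 0" using E[of 0 0] by (simp only: cvals) simp
  have e11: "Im (Ztilde Z $$ (1,1)) = b 1 1" using E[of 1 1] by (simp only: cvals) simp
  have e22: "Im (Ztilde Z $$ (2,2)) = b 2 2" using E[of 2 2] by (simp only: cvals) simp
  have e01: "Im (Ztilde Z $$ (0,1)) = -1/2 * b 0 1 - s3 * a 0 1" using E[of 0 1] by (simp only: cvals) simp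
  have e02: "Im (Ztilde Z $$ (0,2)) = -1/2 * b 0 2 + s3 * a 0 2" using E[of 0 2] by (simp only: cvals) simp
  have e10: "Im (Ztilde Z $$ (1,0)) = -1/2 * b 0 1 + s3 * a 0 1" using E[of 1 0] s01 by (simp only: cvals) simp
  have e12: "Im (Ztilde Z $$ (1,2)) = -1/2 * b 1 2 - s3 * a 1 2" using E[of 1 2] by (simp only: cvals) simp
  have e20: "Im (Ztilde Z $$ (2,0)) = -1/2 * b 0 2 - s3 * a 0 2" using E[of 2 0] s02 by (simp only: cvals) simp
  have e21: "Im (Ztilde Z $$ (2,1)) = -1/2 * b 1 2 + s3 * a 1 2" using E[of 2 1] s12 by (simp only: cvals) simp
  have "(\<Sum>k<3. \<Sum>l<3. x k * Im (Ztilde Z $$ (k,l)) * x l) =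
    b 0 0 * (x 0)^2 + b 1 1 * (x 1)^2 + b 2 2 * (x 2)^2 - b 0 1 * x 0 * x 1 - b 0 2 * x 0 * x 2 - b 1 2 * x 1 * x 2"
    unfolding sum9 e00 e11 e22 e01 e02 e10 e12 e20 e21
    by (simp add: algebra_simps power2_eq_square)
  also have "\<dots> \<ge> 0" using dd3[of b "x 0" "x 1" "x 2", OF d0 d1 d2 s01(2) s02(2) s12(2)] .
  finally show ?thesis .
qed


lemma smult_quad:
  fixes A :: "real mat"
  assumes "A \<in> carrier_mat n n" "u \<in> carrier_vec n"
  shows "u \<bullet> ((c \<cdot>\<^sub>m A) *\<^sub>v u) = c * (u \<bullet> (A *\<^sub>v u))"
proof -
  have "(c \<cdot>\<^sub>m A) *\<^sub>v u = c \<cdot>\<^sub>v (A *\<^sub>v u)"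
    using assms by (intro eq_vecI) (auto simp: scalar_prod_def sum_distrib_left ac_simps)
  then show ?thesis using assms by simp
qed

lemma sum3: "(\<Sum>i<3*N. f i) = (\<Sum>m<N. \<Sum>k<3. f (3*m+k :: nat)) "
proof (induction N)
  case 0 then show ?case by simp
next
  case (Suc N)
  have "(\<Sum>i<3*Suc N. f i) = (\<Sum>i<3*N. f i) + f (3*N) + f (3*N+1) + f (3*N+2)"
    by (simp add: eval_nat_numeral add.assoc)
  then show ?case using Suc by (simp add: eval_nat_numeral add.assoc)
qed

lemma bdiag_entry:
  assumes "m < N" "m' < N" "k < 3" "k' < 3"
  shows "bdiag3 N Y $$ (3*m+k, 3*m'+k') = (if m = m' then Y (m+1) $$ (k,k') else 0)"
proof -
  have "3*m+k < 3*N" "3*m'+k' < 3*N" using assms by linarith+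
  then show ?thesis using assms unfolding bdiag3_def by simp
qed

lemma bdiag_quad:
  fixes Y :: "nat \<Rightarrow> real mat"
  assumes w: "w \<in> carrier_vec (3*N)"
   and Yq: "\<And>n x. 1\<le>n \<Longrightarrow> n\<le>N \<Longrightarrow> (\<Sum>k<3. \<Sum>l<3. x k * Y n $$ (k,l) * x l) \<ge> 0"
  shows "w \<bullet> (bdiag3 N Y *\<^sub>v w) \<ge> 0"
proof -
  let ?B = "bdiag3 N Y"
  have "w \<bullet> (?B *\<^sub>v w) = (\<Sum>i<3*N. w$i * (\<Sum>j<3*N. ?B $$ (i,j) * w$j))"
    using w unfolding scalar_prod_def mult_mat_vec_def
    by (simp add: bdiag3_def atLeast0LessThan row_def)
  also have "\<dots> = (\<Sum>m<N. \<Sum>k<3. w$(3*m+k) * (\<Sum>m'<N. \<Sum>k'<3. ?B $$ (3*m+k, 3*m'+k') * w$(3*m'+k')))"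
    by (simp add: sum3)
  also have "\<dots> = (\<Sum>m<N. \<Sum>k<3. w$(3*m+k) * (\<Sum>k'<3. Y (m+1) $$ (k,k') * w$(3*m+k')))"
  proof (intro sum.cong refl)
    fix m k assume m: "m \<in> {..<N}" and k: "k \<in> {..<3::nat}"
    have "(\<Sum>m'<N. \<Sum>k'<3. ?B $$ (3*m+k, 3*m'+k') * w$(3*m'+k'))
       = (\<Sum>m'<N. if m = m' then (\<Sum>k'<3. Y (m+1) $$ (k,k') * w$(3*m+k')) else 0)"
      using m k by (intro sum.cong refl) (auto simp: bdiag_entry)
    also have "\<dots> = (\<Sum>k'<3. Y (m+1) $$ (k,k') * w$(3*m+k'))"
      using m by (simp add: sum.delta)
    finally show "w$(3*m+k) * (\<Sum>m'<N. \<Sum>k'<3. ?B $$ (3*m+k, 3*m'+k') * w$(3*m'+k'))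
       = w$(3*m+k) * (\<Sum>k'<3. Y (m+1) $$ (k,k') * w$(3*m+k'))" by simp
  qed
  also have "\<dots> = (\<Sum>m<N. \<Sum>k<3. \<Sum>k'<3. w$(3*m+k) * Y (m+1) $$ (k,k') * w$(3*m+k'))"
    by (simp add: sum_distrib_left mult.assoc)
  also have "\<dots> \<ge> 0"
  proof (rule sum_nonneg)
    fix m assume "m \<in> {..<N}"
    then show "(\<Sum>k<3. \<Sum>k'<3. w$(3*m+k) * Y (m+1) $$ (k,k') * w$(3*m+k')) \<ge> 0"
      using Yq[of "m+1" "\<lambda>k. w$(3*m+k)"] by simp
  qed
  finally show ?thesis .
qed

lemma Mmat_carrier: "Mmat N par \<in> carrier_mat (3*N) (3*N)"
  unfolding Mmat_def Tmat_def carrier_mat_def by simp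

lemma bdiag_carrier: "bdiag3 N Y \<in> carrier_mat (3*N) (3*N)"
  unfolding bdiag3_def by simp

theorem corollary1:
  fixes N :: nat and par :: "nat \<Rightarrow> nat" and Z :: "nat \<Rightarrow> complex mat"
  assumes parent: "\<And>n. 1 \<le> n \<Longrightarrow> n \<le> N \<Longrightarrow> par n < n"
    and Z_dim: "\<And>n. 1 \<le> n \<Longrightarrow> n \<le> N \<Longrightarrow> Z n \<in> carrier_mat 3 3"
    and Z_sym: "\<And>n. 1 \<le> n \<Longrightarrow> n \<le> N \<Longrightarrow> transpose_mat (Z n) = Z n"
    and dd: "\<And>n. 1 \<le> n \<Longrightarrow> n \<le> N \<Longrightarrow> strictly_diag_dominant (map_mat Im (Z n))"
    and pos: "\<And>n k. 1 \<le> n \<Longrightarrow> n \<le> N \<Longrightarrow> k < 3 \<Longrightarrow> Im (Z n $$ (k,k)) > 0"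
  shows "psd_real (Xmat N par Z)"
proof -
  let ?M = "Mmat N par"
  let ?Y = "\<lambda>n. map_mat Im (Ztilde (Z n))"
  let ?B = "bdiag3 N ?Y"
  have M: "?M \<in> carrier_mat (3*N) (3*N)" by (rule Mmat_carrier)
  have B: "?B \<in> carrier_mat (3*N) (3*N)" by (rule bdiag_carrier)
  have Mt: "transpose_mat ?M \<in> carrier_mat (3*N) (3*N)" using M by simp
  have P: "?M * ?B * transpose_mat ?M \<in> carrier_mat (3*N) (3*N)" using M B Mt by simp
  have dimX: "dim_row (Xmat N par Z) = 3*N" using P M unfolding Xmat_def by auto
  show ?thesis unfolding psd_real_def dimX
  proof
    fix u :: "real vec" assume u: "u \<in> carrier_vec (3*N)"
    define w where "w = transpose_mat ?M *\<^sub>v u"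
    have w: "w \<in> carrier_vec (3*N)" using Mt u unfolding w_def by simp
    have Yq: "\<And>n x. 1\<le>n \<Longrightarrow> n\<le>N \<Longrightarrow> (\<Sum>k<3. \<Sum>l<3. x k * ?Y n $$ (k,l) * x l) \<ge> 0"
    proof -
      fix n x assume n: "1 \<le> n" "n \<le> N"
      have Zt: "Ztilde (Z n) \<in> carrier_mat 3 3" using Z_dim[OF n]
        unfolding Ztilde_def diag_vec_def alpha_vec_def carrier_mat_def by simp
      have "(\<Sum>k<3. \<Sum>l<3. x k * ?Y n $$ (k,l) * x l) = (\<Sum>k<3. \<Sum>l<3. x k * Im (Ztilde (Z n) $$ (k,l)) * x l)"
        using Zt by (intro sum.cong refl) auto
      also have "\<dots> \<ge> 0" by (rule quad3) (use Z_dim[OF n] Z_sym[OF n] dd[OF n] pos[OF n] in auto)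
      finally show "(\<Sum>k<3. \<Sum>l<3. x k * ?Y n $$ (k,l) * x l) \<ge> 0" .
    qed
    have "u \<bullet> (Xmat N par Z *\<^sub>v u) = 2 * (u \<bullet> ((?M * ?B * transpose_mat ?M) *\<^sub>v u))"
      unfolding Xmat_def using smult_quad[OF P u] .
    also have "(?M * ?B * transpose_mat ?M) *\<^sub>v u = ?M *\<^sub>v (?B *\<^sub>v w)"
    proof -
      have MB: "?M * ?B \<in> carrier_mat (3*N) (3*N)" using M B by simp
      have "(?M * ?B * transpose_mat ?M) *\<^sub>v u = (?M * ?B) *\<^sub>v w"
        unfolding w_def by (rule assoc_mult_mat_vec[OF MB Mt u])
      also have "\<dots> = ?M *\<^sub>v (?B *\<^sub>v w)" by (rule assoc_mult_mat_vec[OF M B w])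
      finally show ?thesis .
    qed
    also have "u \<bullet> (?M *\<^sub>v (?B *\<^sub>v w)) = w \<bullet> (?B *\<^sub>v w)"
      unfolding w_def using transpose_vec_mult_scalar[OF M, of "?B *\<^sub>v w" u] M B u w w_def by simp
    finally have "u \<bullet> (Xmat N par Z *\<^sub>v u) = 2 * (w \<bullet> (?B *\<^sub>v w))" .
    moreover have "w \<bullet> (?B *\<^sub>v w) \<ge> 0" by (rule bdiag_quad[OF w Yq])
    ultimately show "u \<bullet> (Xmat N par Z *\<^sub>v u) \<ge> 0" by simp
  qed
qed

end
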